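(* Let $n\ge 1$ be an integer and $b_a,b_v,c$ real parameters. For $p,q\in[0,1]$ let $n_G\sim\mathrm{Bin}(n,p)$ and, conditionally on $n_G$, $n_V\sim\mathrm{Bin}(n-n_G,q)$ (equivalently $(n_G,n_V)$ is multinomial with $n$ trials and outcome probabilities $p,(1-p)q,(1-p)(1-q)$). Define $$w_G=\mathbb E\Big[\tfrac{b_a(n_G+1)}{n+1}\Big],\quad w_V=\mathbb E\Big[\tfrac{b_an_G}{n+1}\Big]+\mathbb E\Big[\tfrac{b_v(n_V+1)}{n-n_G+1}\Big]-c,\quad w_D=\mathbb E\Big[\tfrac{b_an_G}{n+1}\Big]+\mathbb E\Big[\tfrac{b_vn_V}{n-n_G+1}\Big],$$ and $\langle w\rangle_{V,D}=qw_V+(1-q)w_D$. Then $$w_G-\langle w\rangle_{V,D}=\frac{b_a}{n+1}-q(b_v-c),\qquad w_V-w_D=\frac{b_v}{n+1}\sum_{k=0}^n p^k-c.$$ Consequently the dynamics $\dot p=p(1-p)(w_G-\langle w\rangle_{V,D})$, $\dot q=q(1-q)(w_V-w_D)$ take the form $$\dot p=p(1-p)\Big(\frac{b_a}{n+1}-q(b_v-c)\Big),\qquad \dot q=q(1-q)\Big(\frac{b_v}{n+1}\sum_{k=0}^n p^k-c\Big).$$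
   Context: This is the "double goods game": $p$ is the proportion of glycolytic cells (G), $q$ the proportion of VEGF (over)producers (V) among aerobic cells (V and D). $b_a$ is the benefit per unit of acidification (a public good produced by G cells and shared among all $n+1$ group members), $b_v$ the benefit per unit of vascularization (a club good produced by V cells at cost $c$ and shared only among the $n-n_G+1$ aerobic members of the group), and $n$ the number of interaction partners. *)

theory Defs
  imports "HOL-Probability.Probability"
begin

definition group_pmf :: "nat \<Rightarrow> real \<Rightarrow> real \<Rightarrow> (nat \<times> nat) pmf" where
  "group_pmf n p q =
     bind_pmf (binomial_pmf n p) (\<lambda>g. map_pmf (\<lambda>v. (g, v)) (binomial_pmf (n - g) q))"

definition wG :: "nat \<Rightarrow> real \<Rightarrow> real \<Rightarrow> real \<Rightarrow> real \<Rightarrow> real \<Rightarrow> real" where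
  "wG n ba bv c p q =
     measure_pmf.expectation (group_pmf n p q) (\<lambda>(g, v). ba * (real g + 1) / (real n + 1))"

definition wV :: "nat \<Rightarrow> real \<Rightarrow> real \<Rightarrow> real \<Rightarrow> real \<Rightarrow> real \<Rightarrow> real" where
  "wV n ba bv c p q =
     measure_pmf.expectation (group_pmf n p q) (\<lambda>(g, v). ba * real g / (real n + 1))
   + measure_pmf.expectation (group_pmf n p q)
       (\<lambda>(g, v). bv * (real v + 1) / (real n - real g + 1))
   - c"

definition wD :: "nat \<Rightarrow> real \<Rightarrow> real \<Rightarrow> real \<Rightarrow> real \<Rightarrow> real \<Rightarrow> real" where
  "wD n ba bv c p q =
     measure_pmf.expectation (group_pmf n p q) (\<lambda>(g, v). ba * real g / (real n + 1))
   + measure_pmf.expectation (group_pmf n p q)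
       (\<lambda>(g, v). bv * real v / (real n - real g + 1))"

definition wVD :: "nat \<Rightarrow> real \<Rightarrow> real \<Rightarrow> real \<Rightarrow> real \<Rightarrow> real \<Rightarrow> real" where
  "wVD n ba bv c p q = q * wV n ba bv c p q + (1 - q) * wD n ba bv c p q"

definition pdot :: "nat \<Rightarrow> real \<Rightarrow> real \<Rightarrow> real \<Rightarrow> real \<Rightarrow> real \<Rightarrow> real" where
  "pdot n ba bv c p q = p * (1 - p) * (wG n ba bv c p q - wVD n ba bv c p q)"

definition qdot :: "nat \<Rightarrow> real \<Rightarrow> real \<Rightarrow> real \<Rightarrow> real \<Rightarrow> real \<Rightarrow> real" where
  "qdot n ba bv c p q = q * (1 - q) * (wV n ba bv c p q - wD n ba bv c p q)"

end

theory Submission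
  imports Defs
begin

definition B :: "nat \<Rightarrow> real \<Rightarrow> nat \<Rightarrow> real" where
  "B n p k = real (n choose k) * p ^ k * (1 - p) ^ (n - k)"

lemma B_sum: "(\<Sum>k\<le>n. B n p k) = 1"
proof -
  have "(\<Sum>k\<le>n. B n p k) = (p + (1 - p)) ^ n"
    by (subst binomial_ring) (simp add: B_def atLeast0AtMost mult_ac)
  then show ?thesis by simp
qed

lemma B_mean: "(\<Sum>k\<le>m. B m q k * real k) = real m * q"
proof (cases m)
  case 0 then show ?thesis by simp
next
  case (Suc m')
  have "(\<Sum>k\<le>m. B m q k * real k) = (\<Sum>k\<le>m'. B (Suc m') q (Suc k) * real (Suc k))"
    unfolding Suc by (subst sum.atMost_Suc_shift) simp
  also have "\<dots> = (\<Sum>k\<le>m'. real (Suc m') * q * B m' q k)"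
  proof (rule sum.cong[OF refl])
    fix k assume "k \<in> {..m'}"
    have e: "real (Suc k) * real (Suc m' choose Suc k) = real (Suc m') * real (m' choose k)"
      by (metis Suc_times_binomial of_nat_mult)
    have "B (Suc m') q (Suc k) * real (Suc k) = (real (Suc k) * real (Suc m' choose Suc k)) * (q^(Suc k) * (1-q)^(m'-k))"
      unfolding B_def by (simp only: diff_Suc_Suc mult_ac)
    also have "\<dots> = (real (Suc m') * real (m' choose k)) * (q^(Suc k) * (1-q)^(m'-k))" by (simp only: e)
    also have "\<dots> = real(Suc m')*q*B m' q k" unfolding B_def by (simp only: power_Suc mult_ac)
    finally show "B (Suc m') q (Suc k) * real (Suc k) = real (Suc m') * q * B m' q k" .
  qed
  also have "\<dots> = real m * q" using B_sum[of m' q] by (simp add: Suc sum_distrib_left[symmetric])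
  finally show ?thesis .
qed

lemma E_bin:
  assumes q: "q \<in> {0..1}" and f: "\<And>v. f v = a * real v + b"
  shows "measure_pmf.expectation (binomial_pmf m q) f = a * real m * q + b"
proof -
  have "measure_pmf.expectation (binomial_pmf m q) f = (\<Sum>k\<le>m. B m q k * (a * real k + b))"
    using q by (subst expectation_binomial_pmf') (auto simp: B_def f)
  also have "\<dots> = a * (\<Sum>k\<le>m. B m q k * real k) + b * (\<Sum>k\<le>m. B m q k)"
    by (simp add: algebra_simps sum.distrib sum_distrib_left)
  also have "\<dots> = a * real m * q + b" by (simp add: B_sum B_mean)
  finally show ?thesis .
qed

lemma E_group:
  assumes p: "p \<in> {0..1}" and q: "q \<in> {0..1}"
  shows "measure_pmf.expectation (group_pmf n p q) h =
    (\<Sum>g\<le>n. B n p g * measure_pmf.expectation (binomial_pmf (n-g) q) (\<lambda>v. h (g,v)))"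
  unfolding group_pmf_def
  using p q
  by (subst pmf_expectation_bind[where A="{..n}"])
     (auto simp: B_def set_pmf_binomial_eq split: if_splits)

lemma B_inv:
  assumes p: "p \<in> {0..1}"
  shows "(\<Sum>g\<le>n. B n p g / (real n - real g + 1)) = (\<Sum>k=0..n. p ^ k) / (real n + 1)"
proof -
  have c: "(real n + 1) * B n p g / (real n - real g + 1) = real (Suc n choose g) * p ^ g * (1 - p) ^ (n - g)"
    if "g \<le> n" for g
  proof -
    have "(Suc n - g) * (Suc n choose g) = Suc n * (n choose g)"
      using binomial_absorb_comp[of "Suc n" g] by simp
    then have "real (Suc n - g) * real (Suc n choose g) = real (Suc n) * real (n choose g)"
      by (metis of_nat_mult)
    moreover have "real (Suc n - g) = real n - real g + 1" using that by simp
    ultimately have "real (Suc n choose g) = (real n + 1) * real (n choose g) / (real n - real g + 1)"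
      using that by (simp add: field_simps)
    then show ?thesis unfolding B_def by simp
  qed
  have S: "(real n + 1) * (\<Sum>g\<le>n. B n p g / (real n - real g + 1))
        = (\<Sum>g\<le>n. real (Suc n choose g) * p ^ g * (1 - p) ^ (n - g))"
  proof -
    have "(real n + 1) * (\<Sum>g\<le>n. B n p g / (real n - real g + 1))
        = (\<Sum>g\<le>n. (real n + 1) * B n p g / (real n - real g + 1))"
      by (simp add: sum_distrib_left)
    also have "\<dots> = (\<Sum>g\<le>n. real (Suc n choose g) * p ^ g * (1 - p) ^ (n - g))"
      by (rule sum.cong[OF refl]) (simp add: c)
    finally show ?thesis .
  qed
  have key: "(\<Sum>g\<le>n. real (Suc n choose g) * p ^ g * (1 - p) ^ (n - g)) = (\<Sum>k=0..n. p ^ k)"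
  proof (cases "p = 1")
    case True
    have "(\<Sum>g\<le>n. real (Suc n choose g) * p ^ g * (1 - p) ^ (n - g))
          = (\<Sum>g\<in>{n}. real (Suc n choose g) * p ^ g * (1 - p) ^ (n - g))"
      using True by (intro sum.mono_neutral_right) auto
    then show ?thesis using True by simp
  next
    case False
    have "(1 - p) * (\<Sum>g\<le>n. real (Suc n choose g) * p ^ g * (1 - p) ^ (n - g))
        = (\<Sum>g\<le>n. real (Suc n choose g) * p ^ g * (1 - p) ^ (Suc n - g))"
      by (simp add: sum_distrib_left) (intro sum.cong refl, simp add: Suc_diff_le algebra_simps)
    also have "\<dots> = (\<Sum>g\<le>Suc n. real (Suc n choose g) * p ^ g * (1 - p) ^ (Suc n - g)) - p ^ Suc n"
      by simp
    also have "\<dots> = (p + (1 - p)) ^ Suc n - p ^ Suc n"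
      by (subst binomial_ring) (simp add: atLeast0AtMost mult_ac)
    also have "\<dots> = (1 - p) * (\<Sum>k=0..n. p ^ k)"
      using one_diff_power_eq[of p "Suc n"] by (simp add: atLeast0AtMost lessThan_Suc_atMost)
    finally show ?thesis using False by simp
  qed
  have "(real n + 1) * (\<Sum>g\<le>n. B n p g / (real n - real g + 1)) = (\<Sum>k=0..n. p ^ k)"
    using S key by simp
  then show ?thesis by (simp add: eq_divide_eq mult.commute)
qed

lemma aux34: fixes x q bv :: real assumes "x \<ge> 0"
  shows "q * (bv * (x * q + 1) / (x + 1)) + (1 - q) * (bv * (x * q) / (x + 1)) = q * bv"
proof -
  have nz: "x + 1 \<noteq> 0" using assms by simp
  have "q * (bv * (x * q + 1) / (x + 1)) + (1 - q) * (bv * (x * q) / (x + 1))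
      = (q * (bv * (x * q + 1)) + (1 - q) * (bv * (x * q))) / (x + 1)"
    by (simp add: add_divide_distrib)
  also have "\<dots> = (q * bv) * (x + 1) / (x + 1)"
    by (simp add: algebra_simps)
  also have "\<dots> = q * bv" using nz by simp
  finally show ?thesis .
qed
lemma E_group_aff:
  assumes p: "p \<in> {0..1}" and q: "q \<in> {0..1}"
    and h: "\<And>g v. g \<le> n \<Longrightarrow> h (g, v) = a g * real v + b g"
  shows "measure_pmf.expectation (group_pmf n p q) h =
    (\<Sum>g\<le>n. B n p g * (a g * real (n - g) * q + b g))"
  unfolding E_group[OF p q]
  by (rule sum.cong[OF refl]) (subst E_bin[OF q], auto simp: h)

theorem mainTheorem3:
  fixes n :: nat and ba bv c p q :: real
  assumes "n \<ge> 1" and "p \<in> {0..1}" and "q \<in> {0..1}"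
  shows "wG n ba bv c p q - wVD n ba bv c p q = ba / (real n + 1) - q * (bv - c) \<and>
         wV n ba bv c p q - wD n ba bv c p q = bv / (real n + 1) * (\<Sum>k=0..n. p ^ k) - c \<and>
         pdot n ba bv c p q = p * (1 - p) * (ba / (real n + 1) - q * (bv - c)) \<and>
         qdot n ba bv c p q = q * (1 - q) * (bv / (real n + 1) * (\<Sum>k=0..n. p ^ k) - c)"
proof -
  note pq = assms(2,3)
  have d: "real n - real g + 1 = real (n - g) + 1" if "g \<le> n" for g using that by simp
  have E1: "measure_pmf.expectation (group_pmf n p q) (\<lambda>(g, v). ba * (real g + 1) / (real n + 1))
     = (\<Sum>g\<le>n. B n p g * (ba * (real g + 1) / (real n + 1)))"
    by (subst E_group_aff[OF pq, where a="\<lambda>_. 0" and b="\<lambda>g. ba * (real g + 1) / (real n + 1)"]) auto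
  have E2: "measure_pmf.expectation (group_pmf n p q) (\<lambda>(g, v). ba * real g / (real n + 1))
     = (\<Sum>g\<le>n. B n p g * (ba * real g / (real n + 1)))"
    by (subst E_group_aff[OF pq, where a="\<lambda>_. 0" and b="\<lambda>g. ba * real g / (real n + 1)"]) auto
  have E3: "measure_pmf.expectation (group_pmf n p q) (\<lambda>(g, v). bv * (real v + 1) / (real n - real g + 1))
     = (\<Sum>g\<le>n. B n p g * (bv * (real (n - g) * q + 1) / (real (n - g) + 1)))"
    by (subst E_group_aff[OF pq, where a="\<lambda>g. bv / (real (n - g) + 1)" and b="\<lambda>g. bv / (real (n - g) + 1)"])
       (auto simp: of_nat_diff distrib_left add_divide_distrib mult.assoc)
  have E4: "measure_pmf.expectation (group_pmf n p q) (\<lambda>(g, v). bv * real v / (real n - real g + 1))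
     = (\<Sum>g\<le>n. B n p g * (bv * (real (n - g) * q) / (real (n - g) + 1)))"
    by (subst E_group_aff[OF pq, where a="\<lambda>g. bv / (real (n - g) + 1)" and b="\<lambda>g. 0"])
       (auto simp: of_nat_diff mult.assoc)
  define S1 where "S1 = (\<Sum>g\<le>n. B n p g * (ba * (real g + 1) / (real n + 1)))"
  define S2 where "S2 = (\<Sum>g\<le>n. B n p g * (ba * real g / (real n + 1)))"
  define S3 where "S3 = (\<Sum>g\<le>n. B n p g * (bv * (real (n - g) * q + 1) / (real (n - g) + 1)))"
  define S4 where "S4 = (\<Sum>g\<le>n. B n p g * (bv * (real (n - g) * q) / (real (n - g) + 1)))"
  have 12: "S1 - S2 = ba / (real n + 1)"
  proof -
    have "S1 - S2 = (\<Sum>g\<le>n. B n p g * (ba * (real g + 1) / (real n + 1) - ba * real g / (real n + 1)))"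
      unfolding S1_def S2_def by (simp add: sum_subtractf right_diff_distrib)
    also have "\<dots> = (\<Sum>g\<le>n. B n p g * (ba / (real n + 1)))"
      by (rule sum.cong[OF refl]) (simp add: diff_divide_distrib[symmetric] distrib_left)
    also have "\<dots> = ba / (real n + 1)"
      by (subst sum_distrib_right[symmetric]) (simp add: B_sum)
    finally show ?thesis .
  qed
  have 34: "q * S3 + (1 - q) * S4 = q * bv"
  proof -
    have "q * S3 + (1 - q) * S4 = (\<Sum>g\<le>n. q * (B n p g * (bv * (real (n - g) * q + 1) / (real (n - g) + 1)))
              + (1 - q) * (B n p g * (bv * (real (n - g) * q) / (real (n - g) + 1))))"
      unfolding S3_def S4_def by (simp only: sum_distrib_left sum.distrib)
    also have "\<dots> = (\<Sum>g\<le>n. B n p g * (q * bv))"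
    proof (rule sum.cong[OF refl])
      fix g
      have "q * (B n p g * (bv * (real (n - g) * q + 1) / (real (n - g) + 1)))
              + (1 - q) * (B n p g * (bv * (real (n - g) * q) / (real (n - g) + 1)))
          = B n p g * (q * (bv * (real (n - g) * q + 1) / (real (n - g) + 1))
              + (1 - q) * (bv * (real (n - g) * q) / (real (n - g) + 1)))"
        by (simp only: distrib_left mult.left_commute)
      also have "\<dots> = B n p g * (q * bv)" by (subst aux34) simp_all
      finally show "q * (B n p g * (bv * (real (n - g) * q + 1) / (real (n - g) + 1)))
              + (1 - q) * (B n p g * (bv * (real (n - g) * q) / (real (n - g) + 1))) = B n p g * (q * bv)" .
    qed
    also have "\<dots> = q * bv" by (subst sum_distrib_right[symmetric]) (simp add: B_sum)
    finally show ?thesis .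
  qed
  have "S1 - q * (S2 + S3 - c) - (1 - q) * (S2 + S4) = ba / (real n + 1) - q * (bv - c)"
  proof -
    have "S1 - q * (S2 + S3 - c) - (1 - q) * (S2 + S4) = (S1 - S2) - (q * S3 + (1 - q) * S4) + q * c"
      by (simp add: algebra_simps)
    then show ?thesis using 12 34 by (simp add: algebra_simps)
  qed
  then have A: "wG n ba bv c p q - wVD n ba bv c p q = ba / (real n + 1) - q * (bv - c)"
  proof -
    have "wG n ba bv c p q - wVD n ba bv c p q = S1 - q * (S2 + S3 - c) - (1 - q) * (S2 + S4)"
      unfolding wG_def wVD_def wV_def wD_def E1 E2 E3 E4 S1_def S2_def S3_def S4_def
      by (rule diff_diff_eq[symmetric])
    then show ?thesis using \<open>S1 - q * (S2 + S3 - c) - (1 - q) * (S2 + S4) = ba / (real n + 1) - q * (bv - c)\<close>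
      by (simp only:)
  qed
  have ab: "\<And>a b c d :: real. a + b - c - (a + d) = b - d - c" by simp
  have VD: "wV n ba bv c p q - wD n ba bv c p q = S3 - S4 - c"
    unfolding wV_def wD_def E2 E3 E4 S3_def S4_def by (rule ab)
  have "S3 - S4 = (\<Sum>g\<le>n. B n p g * (bv * (real (n - g) * q + 1) / (real (n - g) + 1)
                                - bv * (real (n - g) * q) / (real (n - g) + 1)))"
    unfolding S3_def S4_def by (simp add: sum_subtractf right_diff_distrib)
  also have "\<dots> = (\<Sum>g\<le>n. bv * (B n p g / (real n - real g + 1)))"
  proof (rule sum.cong[OF refl])
    fix g assume "g \<in> {..n}"
    then have d': "real (n - g) + 1 = real n - real g + 1" by (simp add: of_nat_diff)
    have e: "bv * (real (n - g) * q + 1) / (real (n - g) + 1) - bv * (real (n - g) * q) / (real (n - g) + 1)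
        = bv / (real (n - g) + 1)"
      by (simp add: diff_divide_distrib[symmetric] distrib_left)
    show "B n p g * (bv * (real (n - g) * q + 1) / (real (n - g) + 1)
                                - bv * (real (n - g) * q) / (real (n - g) + 1))
        = bv * (B n p g / (real n - real g + 1))" unfolding e unfolding d' by simp
  qed
  also have "\<dots> = bv / (real n + 1) * (\<Sum>k=0..n. p ^ k)"
    by (subst sum_distrib_left[symmetric]) (simp add: B_inv[OF assms(2)])
  finally have Bq: "wV n ba bv c p q - wD n ba bv c p q = bv / (real n + 1) * (\<Sum>k=0..n. p ^ k) - c"
    unfolding VD by (simp only:)
  show ?thesis by (simp only: pdot_def qdot_def A Bq)
qed

end
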